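(* (Fundamental Theorem of Calculus) For every $u\in\mathfrak{U}(\mathbb{R})$ and every $a,b\in\Gamma$ with $a<b$, $$\int_a^bDu(x)\,dx=u(b)-u(a).$$
   Context: Framework (Λ-limits / nonstandard analysis): $\mathfrak{X}=\mathcal{P}_{fin}(\mathfrak{F}(\mathbb{R},\mathbb{R}))$ directed by inclusion; $\mathbb{R}^*\supset\mathbb{R}$ is a non-Archimedean ordered field of Λ-limits of nets $\mathfrak{X}\to\mathbb{R}$; internal sets/functions, natural extensions $E^*,f^*$, hyperfinite sums are defined via Λ-limits; for internal $u$, $\int_a^bu\,dx$ means $(\int_a^b)^*u\,dx$, the natural extension of the Lebesgue definite integral. For $\lambda\in\mathfrak{X}$, $V_\lambda$ is the span of $\lambda$; an internal $u=\lim_{\lambda\uparrow\Lambda}u_\lambda$ is an ultrafunction if $u_\lambda\in V_\lambda$ for all $\lambda$; for a vector space $W$ of real functions, $\widetilde{W}=W^*\cap\{\text{ultrafunctions}\}$. Grid: a positive infinite $\beta\in\mathbb{R}^*$, a hyperfinite $\Gamma=\{\gamma_0<\dots<\gamma_\ell\}\subset\mathbb{R}^*$ with $\gamma_0=-\beta$, $\gamma_\ell=\beta$, $0<\gamma_{j+1}-\gamma_j<\eta$ for a fixed infinitesimal $\eta$, and $\mathbb{R}\subseteq\Gamma$; $\mathbb{I}_j=(\gamma_j,\gamma_{j+1})_{\mathbb{R}^*}$ with characteristic function $\chi_j$. $\mathfrak{U}(\mathbb{R})$: functions $u:[-\beta,\beta]\to\mathbb{R}^*$ of the form $\sum_{j=0}^{\ell-1}v_j\chi_j$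 with $v_j\in\widetilde{\mathcal{C}^1(\mathbb{R})}$, with the $L^2$ inner product $\int^*uv$. $u(\gamma_j^\pm)$ are internal one-sided limits at grid points; values at grid points: $u(\gamma_j)=\tfrac12(u(\gamma_j^+)+u(\gamma_j^-))$ for $1\le j\le\ell-1$, $u(-\beta)=u(\gamma_0^+)$, $u(\beta)=u(\gamma_\ell^-)$. For $q\in[-\beta,\beta]$, $\delta_q$ is the unique element of $\mathfrak{U}(\mathbb{R})$ with $\int^*w\delta_q=w(q)$ for all $w\in\mathfrak{U}(\mathbb{R})$. Derivative: for $u=\sum_jv_j\chi_j\in\mathfrak{U}(\mathbb{R})$, $u'=\sum_jv_j'\chi_j$ (piecewise derivative), $P_{\mathfrak{U}}$ the orthogonal projection onto $\mathfrak{U}(\mathbb{R})$, $\triangle u(\gamma_j)=u(\gamma_j^+)-u(\gamma_j^-)$, and $Du=P_{\mathfrak{U}}u'+\sum_{j=1}^{\ell-1}\triangle u(\gamma_j)\delta_{\gamma_j}$. *)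

theory Defs
  imports "HOL-Analysis.Analysis"
begin

text \<open>Points of the directed set X are finite sets of functions real => real.
  An element of R* (or an internal object) is represented by a net indexed by X;
  Lambda-limits are taken along a fine ultrafilter Lam on X, so that two
  internal objects are equal iff the nets agree Lam-eventually.\<close>

type_synonym lam_idx = "(real \<Rightarrow> real) set"

definition is_ultrafilter :: "'a filter \<Rightarrow> bool" where
  "is_ultrafilter F \<longleftrightarrow> F \<noteq> bot \<and> (\<forall>P. eventually P F \<or> eventually (\<lambda>x. \<not> P x) F)"

definition fine_ultrafilter :: "lam_idx filter \<Rightarrow> bool" where
  "fine_ultrafilter Lam \<longleftrightarrow> is_ultrafilter Lam \<and> eventually finite Lam \<and>
     (\<forall>l0. finite l0 \<longrightarrow> eventually (\<lambda>l. l0 \<subseteq> l) Lam)"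

definition infinitesimal_net :: "lam_idx filter \<Rightarrow> (lam_idx \<Rightarrow> real) \<Rightarrow> bool" where
  "infinitesimal_net Lam x \<longleftrightarrow> (\<forall>e>0. eventually (\<lambda>l. \<bar>x l\<bar> < e) Lam)"

definition pos_infinite_net :: "lam_idx filter \<Rightarrow> (lam_idx \<Rightarrow> real) \<Rightarrow> bool" where
  "pos_infinite_net Lam x \<longleftrightarrow> (\<forall>M. eventually (\<lambda>l. x l > M) Lam)"

definition Vspan :: "lam_idx \<Rightarrow> (real \<Rightarrow> real) set" where
  "Vspan l = {f. \<exists>c. f = (\<lambda>x. \<Sum>g\<in>l. c g * g x)}"

definition VC1 :: "lam_idx \<Rightarrow> (real \<Rightarrow> real) set" where
  "VC1 l = Vspan l \<inter> {f. f C1_differentiable_on UNIV}"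

text \<open>The grid at level l is gam 0 < ... < gam L; I_j = (gam j, gam (j+1)).\<close>
definition pw :: "(nat \<Rightarrow> real) \<Rightarrow> nat \<Rightarrow> (nat \<Rightarrow> real \<Rightarrow> real) \<Rightarrow> real \<Rightarrow> real" where
  "pw gam L v x = (\<Sum>j<L. v j x * indicator {gam j<..<gam (Suc j)} x)"

definition UR :: "lam_idx \<Rightarrow> (nat \<Rightarrow> real) \<Rightarrow> nat \<Rightarrow> (real \<Rightarrow> real) set" where
  "UR l gam L = {pw gam L v | v. \<forall>j<L. v j \<in> VC1 l}"

text \<open>L^2 inner product on [-beta, beta] = [gam 0, gam L] (Lebesgue integral).\<close>
definition ipU :: "(nat \<Rightarrow> real) \<Rightarrow> nat \<Rightarrow> (real \<Rightarrow> real) \<Rightarrow> (real \<Rightarrow> real) \<Rightarrow> real" where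
  "ipU gam L f g = (LBINT x=gam 0..gam L. f x * g x)"

definition gval :: "(nat \<Rightarrow> real) \<Rightarrow> nat \<Rightarrow> (real \<Rightarrow> real) \<Rightarrow> real \<Rightarrow> real" where
  "gval gam L u q =
     (if q = gam 0 then Lim (at_right q) u
      else if q = gam L then Lim (at_left q) u
      else if q \<in> gam ` {1..<L} then (Lim (at_right q) u + Lim (at_left q) u) / 2
      else u q)"

definition deltaU :: "lam_idx \<Rightarrow> (nat \<Rightarrow> real) \<Rightarrow> nat \<Rightarrow> real \<Rightarrow> real \<Rightarrow> real" where
  "deltaU l gam L q = (THE d. d \<in> UR l gam L \<and> (\<forall>w\<in>UR l gam L. ipU gam L w d = gval gam L w q))"

definition projU :: "lam_idx \<Rightarrow> (nat \<Rightarrow> real) \<Rightarrow> nat \<Rightarrow> (real \<Rightarrow> real) \<Rightarrow> real \<Rightarrow> real" where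
  "projU l gam L f = (THE p. p \<in> UR l gam L \<and> (\<forall>w\<in>UR l gam L. ipU gam L (\<lambda>x. f x - p x) w = 0))"

definition pder :: "(nat \<Rightarrow> real) \<Rightarrow> nat \<Rightarrow> (real \<Rightarrow> real) \<Rightarrow> real \<Rightarrow> real" where
  "pder gam L u x = (\<Sum>j<L. deriv u x * indicator {gam j<..<gam (Suc j)} x)"

definition jumpU :: "(nat \<Rightarrow> real) \<Rightarrow> (real \<Rightarrow> real) \<Rightarrow> nat \<Rightarrow> real" where
  "jumpU gam u j = Lim (at_right (gam j)) u - Lim (at_left (gam j)) u"

definition DU :: "lam_idx \<Rightarrow> (nat \<Rightarrow> real) \<Rightarrow> nat \<Rightarrow> (real \<Rightarrow> real) \<Rightarrow> real \<Rightarrow> real" where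
  "DU l gam L u x = projU l gam L (pder gam L u) x
      + (\<Sum>j\<in>{1..<L}. jumpU gam u j * deltaU l gam L (gam j) x)"

end

theory Submission imports Defs "HOL-Library.Function_Algebras"
begin

abbreviation cell :: "(nat \<Rightarrow> real) \<Rightarrow> nat \<Rightarrow> real set" where
  "cell G j \<equiv> {G j<..<G (Suc j)}"

lemma grid_mono:
  assumes "\<forall>j<n. G j < G (Suc j)" "i < k" "k \<le> n"
  shows "G i < (G k :: real)"
  using assms(2,3)
proof (induction k)
  case 0 then show ?case by simp
next
  case (Suc k)
  then show ?case using assms(1)
    by (metis Suc_le_lessD less_Suc_eq less_imp_le_nat order.strict_trans)
qed

lemma grid_le:
  assumes "\<forall>j<n. G j < G (Suc j)" "i \<le> k" "k \<le> n"
  shows "G i \<le> (G k :: real)"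
  using grid_mono[OF assms(1)] assms(2,3) by (cases "i = k") (auto intro: less_imp_le)

lemma grid_inj:
  assumes "\<forall>j<n. G j < G (Suc j)" "i \<le> n" "k \<le> n" "G i = (G k :: real)"
  shows "i = k"
  using grid_mono[OF assms(1)] assms(2-4) by (metis less_irrefl nat_neq_iff)

lemma cell_unique:
  assumes "\<forall>j<n. G j < G (Suc j)" "i < n" "j < n" "x \<in> cell G i" "x \<in> cell G j"
  shows "i = j"
proof (rule ccontr)
  assume "i \<noteq> j"
  then consider "Suc i \<le> j" | "Suc j \<le> i" by linarith
  then show False
  proof cases
    case 1 then have "G (Suc i) \<le> G j" using grid_le[OF assms(1)] assms by auto
    then show False using assms(4,5) by auto
  next
    case 2 then have "G (Suc j) \<le> G i" using grid_le[OF assms(1)] assms by auto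
    then show False using assms(4,5) by auto
  qed
qed

lemma sum_cell:
  assumes "\<forall>j<n. G j < G (Suc j)" "A \<subseteq> {..<n}" "finite A" "j0 < n" "x \<in> cell G j0"
  shows "(\<Sum>i\<in>A. f i * indicator (cell G i) x) = (if j0 \<in> A then f j0 else (0::real))"
proof -
  have "(\<Sum>i\<in>A. f i * indicator (cell G i) x) = (\<Sum>i\<in>A. if i = j0 then f j0 else 0)"
    using cell_unique[OF assms(1) _ assms(4) _ assms(5)] assms(2,5)
    by (intro sum.cong) (auto simp: indicator_def)
  then show ?thesis using assms(3) by simp
qed

lemma sum_out:
  assumes "A \<subseteq> {..<n}" "\<forall>j<n. x \<notin> cell G j"
  shows "(\<Sum>i\<in>A. f i * indicator (cell G i) x) = (0::real)"
  using assms by (intro sum.neutral) (auto simp: indicator_def)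

lemma pw_cell:
  assumes "\<forall>j<n. G j < G (Suc j)" "j < n" "x \<in> cell G j"
  shows "pw G n v x = v j x"
proof -
  have "(\<Sum>i<n. v i x * indicator (cell G i) x) = (if j \<in> {..<n} then v j x else 0)"
    by (rule sum_cell[OF assms(1) _ _ assms(2,3)]) auto
  then show ?thesis using assms(2) by (simp add: pw_def)
qed

lemma pw_out:
  assumes "\<forall>j<n. x \<notin> cell G j"
  shows "pw G n v x = 0"
  unfolding pw_def using sum_out[OF _ assms, of "{..<n}"] by simp

lemma lim_right:
  assumes st: "\<forall>j<n. G j < G (Suc j)" and j: "j < n" and c: "isCont (v j) (G j)"
  shows "Lim (at_right (G j)) (pw G n v) = v j (G j)"
proof -
  have ev: "eventually (\<lambda>x. v j x = pw G n v x) (at_right (G j))"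
    using eventually_at_right_real[of "G j" "G (Suc j)"] st j
    by (auto elim!: eventually_mono simp: pw_cell[OF st j])
  have "(v j \<longlongrightarrow> v j (G j)) (at_right (G j))"
    using c by (simp add: isCont_def filterlim_at_split)
  then have "(pw G n v \<longlongrightarrow> v j (G j)) (at_right (G j))"
    using ev by (rule Lim_transform_eventually)
  then show ?thesis by (intro tendsto_Lim) auto
qed

lemma lim_left:
  assumes st: "\<forall>j<n. G j < G (Suc j)" and k: "0 < k" "k \<le> n" and c: "isCont (v (k - 1)) (G k)"
  shows "Lim (at_left (G k)) (pw G n v) = v (k - 1) (G k)"
proof -
  have k1: "k - 1 < n" "Suc (k - 1) = k" using k by auto
  have ev: "eventually (\<lambda>x. v (k - 1) x = pw G n v x) (at_left (G k))"
  proof -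
    have lt: "G (k - 1) < G k" using st k1 by force
    have "eventually (\<lambda>x. x \<in> cell G (k - 1)) (at_left (G k))"
      unfolding k1(2) by (rule eventually_at_left_real[OF lt])
    then show ?thesis by (rule eventually_mono) (simp add: pw_cell[OF st k1(1)])
  qed
  have "(v (k - 1) \<longlongrightarrow> v (k - 1) (G k)) (at_left (G k))"
    using c by (simp add: isCont_def filterlim_at_split)
  then have "(pw G n v \<longlongrightarrow> v (k - 1) (G k)) (at_left (G k))"
    using ev by (rule Lim_transform_eventually)
  then show ?thesis by (intro tendsto_Lim) auto
qed

lemma gval_pw:
  assumes st: "\<forall>j<n. G j < G (Suc j)" and n: "0 < n" and k: "k \<le> n"
    and c: "\<forall>j<n. \<forall>x. isCont (v j) x"
  shows "gval G n (pw G n v) (G k) = (v (min k (n - 1)) (G k) + v (k - 1) (G k)) / 2"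
proof -
  consider "k = 0" | "k = n" | "0 < k" "k < n" using k by linarith
  then show ?thesis
  proof cases
    case 1 then show ?thesis using lim_right[OF st n, of v] c n by (simp add: gval_def)
  next
    case 2
    then have "G k \<noteq> G 0" using grid_inj[OF st, of k 0] n by auto
    then show ?thesis using lim_left[OF st n order.refl, of v] c n 2 by (simp add: gval_def)
  next
    case 3
    then have "G k \<noteq> G 0" "G k \<noteq> G n" using grid_inj[OF st, of k 0] grid_inj[OF st, of k n] by auto
    moreover have "G k \<in> G ` {1..<n}" using 3 by auto
    ultimately show ?thesis using lim_left[OF st 3(1) k, of v] lim_right[OF st 3(2), of v] c 3
      by (simp add: gval_def)
  qed
qed

lemma jump_pw:
  assumes st: "\<forall>j<n. G j < G (Suc j)" and k: "0 < k" "k < n"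
    and c: "\<forall>j<n. \<forall>x. isCont (v j) x"
  shows "jumpU G (pw G n v) k = v k (G k) - v (k - 1) (G k)"
  using lim_left[OF st k(1) less_imp_le[OF k(2)], of v] lim_right[OF st k(2), of v] c k
  by (simp add: jumpU_def)

lemma pw_restrict:
  assumes st: "\<forall>j<n. G j < G (Suc j)" and ik: "i \<le> k" "k \<le> n"
  shows "indicator {G i<..<G k} x * pw G n v x = (\<Sum>j\<in>{i..<k}. v j x * indicator (cell G j) x)"
proof (cases "\<exists>j0<n. x \<in> cell G j0")
  case True
  then obtain j0 where j0: "j0 < n" "x \<in> cell G j0" by blast
  have s: "(\<Sum>j\<in>{i..<k}. v j x * indicator (cell G j) x) = (if j0 \<in> {i..<k} then v j0 x else 0)"
    by (rule sum_cell[OF st _ _ j0]) (use ik in auto)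
  show ?thesis
  proof (cases "j0 \<in> {i..<k}")
    case True
    then have "G i \<le> G j0" "G (Suc j0) \<le> G k" using grid_le[OF st] ik by auto
    then have "x \<in> {G i<..<G k}" using j0 by auto
    then show ?thesis unfolding s using True pw_cell[OF st j0] by simp
  next
    case False
    then consider "j0 < i" | "k \<le> j0" by auto
    then have "x \<notin> {G i<..<G k}"
    proof cases
      case 1 then have "G (Suc j0) \<le> G i" using grid_le[OF st] ik by auto
      then show ?thesis using j0 by auto
    next
      case 2 then have "G k \<le> G j0" using grid_le[OF st] ik j0 by auto
      then show ?thesis using j0 by auto
    qed
    then show ?thesis unfolding s using False by auto
  qed
next
  case False
  then have "pw G n v x = 0" by (intro pw_out) auto
  moreover have "(\<Sum>j\<in>{i..<k}. v j x * indicator (cell G j) x) = 0"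
    by (rule sum_out[of _ n]) (use ik False in auto)
  ultimately show ?thesis by simp
qed

lemma cell_integrable:
  fixes f :: "real \<Rightarrow> real"
  assumes "G j \<le> G (Suc j)" "continuous_on UNIV f"
  shows "set_integrable lborel (cell G j) f"
proof -
  have "interval_lebesgue_integrable lborel (G j) (G (Suc j)) f"
    by (rule interval_integrable_continuous_on) (use assms in \<open>auto intro: continuous_on_subset\<close>)
  then show ?thesis using assms by (simp add: interval_lebesgue_integrable_def)
qed

lemma int_pw:
  assumes st: "\<forall>j<n. G j < G (Suc j)" and ik: "i \<le> k" "k \<le> n"
    and c: "\<forall>j<n. continuous_on UNIV (v j)"
  shows "(LBINT x=G i..G k. pw G n v x) = (\<Sum>j\<in>{i..<k}. LBINT x=G j..G (Suc j). v j x)"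
proof -
  have le: "G i \<le> G k" using grid_le[OF st ik] .
  have "(LBINT x=G i..G k. pw G n v x) = (LINT x|lborel. indicator {G i<..<G k} x * pw G n v x)"
    using le by (simp add: interval_lebesgue_integral_le_eq set_lebesgue_integral_def)
  also have "\<dots> = (LINT x|lborel. (\<Sum>j\<in>{i..<k}. indicator (cell G j) x *\<^sub>R v j x))"
    using pw_restrict[OF st ik] by (simp add: mult.commute)
  also have "\<dots> = (\<Sum>j\<in>{i..<k}. LINT x|lborel. indicator (cell G j) x *\<^sub>R v j x)"
  proof -
    have "integrable lborel (\<lambda>x. indicator (cell G j) x *\<^sub>R v j x)" if "j \<in> {i..<k}" for j
    proof -
      have "j < n" using ik that by auto
      then have "set_integrable lborel (cell G j) (v j)"
        using st c by (intro cell_integrable) (auto intro: less_imp_le)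
      then show ?thesis by (simp add: set_integrable_def)
    qed
    then show ?thesis by (intro Bochner_Integration.integral_sum) auto
  qed
  also have "\<dots> = (\<Sum>j\<in>{i..<k}. LBINT x=G j..G (Suc j). v j x)"
  proof (rule sum.cong[OF refl])
    fix j assume "j \<in> {i..<k}"
    then have "G j \<le> G (Suc j)" using ik st by (auto intro: less_imp_le)
    then show "(LINT x|lborel. indicator (cell G j) x *\<^sub>R v j x) = (LBINT x=G j..G (Suc j). v j x)"
      by (simp add: interval_lebesgue_integral_le_eq set_lebesgue_integral_def)
  qed
  finally show ?thesis .
qed

definition GD :: "(nat \<Rightarrow> real) \<Rightarrow> nat \<Rightarrow> (real \<Rightarrow> real) set" where
  "GD G n = {pw G n v | v. \<forall>j<n. continuous_on UNIV (v j)}"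

lemma pw_mult:
  assumes st: "\<forall>j<n. G j < G (Suc j)"
  shows "pw G n v x * pw G n w x = pw G n (\<lambda>j x. v j x * w j x) x"
proof (cases "\<exists>j0<n. x \<in> cell G j0")
  case True
  then obtain j0 where "j0 < n" "x \<in> cell G j0" by blast
  then show ?thesis using pw_cell[OF st] by simp
next
  case False then show ?thesis using pw_out[of n x G] by auto
qed

lemma pw_lin:
  "(\<lambda>x. a * pw G n v x + b * pw G n w x) = pw G n (\<lambda>j x. a * v j x + b * w j x)"
proof
  fix x
  have "a * pw G n v x + b * pw G n w x = (\<Sum>j<n. a * (v j x * indicator (cell G j) x) + b * (w j x * indicator (cell G j) x))"
    by (simp only: pw_def sum_distrib_left sum.distrib)
  also have "\<dots> = pw G n (\<lambda>j x. a * v j x + b * w j x) x"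
    by (simp add: pw_def algebra_simps)
  finally show "a * pw G n v x + b * pw G n w x = pw G n (\<lambda>j x. a * v j x + b * w j x) x" .
qed

lemma cell_le: fixes G :: "nat \<Rightarrow> real" shows "\<forall>j<n. G j < G (Suc j) \<Longrightarrow> j < n \<Longrightarrow> G j \<le> G (Suc j)"
  by (simp add: less_imp_le)

lemma ip_pw:
  assumes st: "\<forall>j<n. G j < G (Suc j)"
    and cv: "\<forall>j<n. continuous_on UNIV (v j)" and cw: "\<forall>j<n. continuous_on UNIV (w j)"
  shows "ipU G n (pw G n v) (pw G n w) = (\<Sum>j<n. LBINT x=G j..G (Suc j). v j x * w j x)"
proof -
  have "ipU G n (pw G n v) (pw G n w) = (LBINT x=G 0..G n. pw G n (\<lambda>j x. v j x * w j x) x)"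
    unfolding ipU_def pw_mult[OF st] ..
  also have "\<dots> = (\<Sum>j\<in>{0..<n}. LBINT x=G j..G (Suc j). v j x * w j x)"
    by (rule int_pw[OF st]) (use cv cw in \<open>auto intro: continuous_intros\<close>)
  finally show ?thesis by (simp add: atLeast0LessThan)
qed

lemma GD_lin_closed:
  "f \<in> GD G n \<Longrightarrow> g \<in> GD G n \<Longrightarrow> (\<lambda>x. a * f x + b * g x) \<in> GD G n"
  unfolding GD_def by (auto simp: pw_lin intro!: continuous_intros)

lemma cell_int:
  fixes G :: "nat \<Rightarrow> real"
  assumes "G j \<le> G (Suc j)" "continuous_on UNIV f"
  shows "interval_lebesgue_integrable lborel (G j) (G (Suc j)) (f :: real \<Rightarrow> real)"
  by (rule interval_integrable_continuous_on) (use assms in \<open>auto intro: continuous_on_subset\<close>)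

lemma GD_lin:
  assumes st: "\<forall>j<n. G j < G (Suc j)" and f: "f \<in> GD G n" and g: "g \<in> GD G n" and h: "h \<in> GD G n"
  shows "ipU G n (\<lambda>x. a * f x + b * g x) h = a * ipU G n f h + b * ipU G n g h"
proof -
  obtain v where v: "f = pw G n v" "\<forall>j<n. continuous_on UNIV (v j)" using f by (auto simp: GD_def)
  obtain v' where v': "g = pw G n v'" "\<forall>j<n. continuous_on UNIV (v' j)" using g by (auto simp: GD_def)
  obtain w where w: "h = pw G n w" "\<forall>j<n. continuous_on UNIV (w j)" using h by (auto simp: GD_def)
  have "ipU G n (\<lambda>x. a * f x + b * g x) h = ipU G n (pw G n (\<lambda>j x. a * v j x + b * v' j x)) (pw G n w)"
    unfolding v v' w pw_lin ..
  also have "\<dots> = (\<Sum>j<n. LBINT x=G j..G (Suc j). (a * v j x + b * v' j x) * w j x)"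
    by (rule ip_pw[OF st]) (use v v' w in \<open>auto intro!: continuous_intros\<close>)
  also have "\<dots> = (\<Sum>j<n. a * (LBINT x=G j..G (Suc j). v j x * w j x) + b * (LBINT x=G j..G (Suc j). v' j x * w j x))"
  proof (rule sum.cong[OF refl])
    fix j assume "j \<in> {..<n}"
    then have j: "j < n" by simp
    have i1: "interval_lebesgue_integrable lborel (G j) (G (Suc j)) (\<lambda>x. a * (v j x * w j x))"
      by (rule cell_int[OF cell_le[OF st j]]) (use v w j in \<open>auto intro!: continuous_intros\<close>)
    have i2: "interval_lebesgue_integrable lborel (G j) (G (Suc j)) (\<lambda>x. b * (v' j x * w j x))"
      by (rule cell_int[OF cell_le[OF st j]]) (use v' w j in \<open>auto intro!: continuous_intros\<close>)
    have "(LBINT x=G j..G (Suc j). (a * v j x + b * v' j x) * w j x)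
        = (LBINT x=G j..G (Suc j). a * (v j x * w j x) + b * (v' j x * w j x))"
      by (simp add: algebra_simps)
    also have "\<dots> = (LBINT x=G j..G (Suc j). a * (v j x * w j x)) + (LBINT x=G j..G (Suc j). b * (v' j x * w j x))"
      using interval_lebesgue_integral_add(2)[OF i1 i2] .
    finally show "(LBINT x=G j..G (Suc j). (a * v j x + b * v' j x) * w j x) = a * (LBINT x=G j..G (Suc j). v j x * w j x) + b * (LBINT x=G j..G (Suc j). v' j x * w j x)"
      by simp
  qed
  also have "\<dots> = a * ipU G n f h + b * ipU G n g h"
    unfolding v v' w by (simp add: ip_pw[OF st v(2) w(2)] ip_pw[OF st v'(2) w(2)] sum.distrib sum_distrib_left)
  finally show ?thesis .
qed

lemma ip_sym: "ipU G n f g = ipU G n g f"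
  unfolding ipU_def by (simp add: mult.commute)

lemma GD_pd:
  assumes st: "\<forall>j<n. G j < G (Suc j)" and f: "f \<in> GD G n" and z: "ipU G n f f = 0"
  shows "f = (\<lambda>x. 0)"
proof -
  obtain v where v: "f = pw G n v" "\<forall>j<n. continuous_on UNIV (v j)" using f by (auto simp: GD_def)
  have eq: "(LBINT x=G j..G (Suc j). v j x * v j x) = integral {G j..G (Suc j)} (\<lambda>x. v j x * v j x)"
    if j: "j < n" for j
    by (rule interval_integral_eq_integral[OF cell_le[OF st j]])
      (rule borel_integrable_atLeastAtMost', use v j in \<open>auto intro!: continuous_intros intro: continuous_on_subset\<close>)
  have nn: "0 \<le> (LBINT x=G j..G (Suc j). v j x * v j x)" if j: "j < n" for j
    unfolding eq[OF j] by (rule integral_nonneg) (rule integrable_continuous_interval, use v j in \<open>auto intro!: continuous_intros intro: continuous_on_subset\<close>)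
  have "(\<Sum>j<n. LBINT x=G j..G (Suc j). v j x * v j x) = 0"
    using z ip_pw[OF st v(2) v(2)] v(1) by simp
  then have z2: "\<forall>j\<in>{..<n}. (LBINT x=G j..G (Suc j). v j x * v j x) = 0"
    by (subst sum_nonneg_eq_0_iff[symmetric]) (use nn in auto)
  have zero: "v j x = 0" if j: "j < n" and x: "x \<in> cell G j" for j x
  proof -
    have "integral (cbox (G j) (G (Suc j))) (\<lambda>x. v j x * v j x) = 0"
      using z2 eq[OF j] j by (simp add: cbox_interval)
    then have "\<forall>y\<in>cbox (G j) (G (Suc j)). v j y * v j y = 0"
      by (subst (asm) integral_cbox_eq_0_iff)
        (use v j st in \<open>auto intro!: continuous_intros intro: continuous_on_subset simp: box_real\<close>)
    then show ?thesis using x by (auto simp: cbox_interval)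
  qed
  show ?thesis
  proof
    fix x
    show "f x = 0"
    proof (cases "\<exists>j0<n. x \<in> cell G j0")
      case True
      then obtain j0 where "j0 < n" "x \<in> cell G j0" by blast
      then show ?thesis using pw_cell[OF st] zero v(1) by simp
    next
      case False then show ?thesis using pw_out[of n x G] v(1) by auto
    qed
  qed
qed

lemma Vspan_empty: "Vspan {} = {\<lambda>x. 0}"
  by (auto simp: Vspan_def)

lemma Vspan_zero: "(\<lambda>x. 0) \<in> Vspan B"
  unfolding Vspan_def by (rule CollectI, rule exI[of _ "\<lambda>_. 0"]) simp

lemma Vspan_lin:
  assumes "f \<in> Vspan B" "g \<in> Vspan B"
  shows "(\<lambda>x. a * f x + b * g x) \<in> Vspan B"
proof -
  obtain c where c: "f = (\<lambda>x. \<Sum>h\<in>B. c h * h x)" using assms(1) by (auto simp: Vspan_def)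
  obtain c' where c': "g = (\<lambda>x. \<Sum>h\<in>B. c' h * h x)" using assms(2) by (auto simp: Vspan_def)
  have eq: "(\<lambda>x. a * f x + b * g x) = (\<lambda>x. \<Sum>h\<in>B. (a * c h + b * c' h) * h x)"
    unfolding c c' by (simp add: sum_distrib_left sum.distrib algebra_simps)
  show ?thesis unfolding Vspan_def mem_Collect_eq
    by (rule exI[of _ "\<lambda>h. a * c h + b * c' h"]) (rule eq)
qed

lemma Vspan_insert:
  assumes "finite B" "b \<notin> B"
  shows "w \<in> Vspan (insert b B) \<longleftrightarrow> (\<exists>s w0. w0 \<in> Vspan B \<and> w = (\<lambda>x. s * b x + w0 x))"
proof
  assume "w \<in> Vspan (insert b B)"
  then obtain c where c: "w = (\<lambda>x. \<Sum>h\<in>insert b B. c h * h x)" by (auto simp: Vspan_def)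
  then have "w = (\<lambda>x. c b * b x + (\<Sum>h\<in>B. c h * h x))" using assms by simp
  moreover have "(\<lambda>x. \<Sum>h\<in>B. c h * h x) \<in> Vspan B" by (auto simp: Vspan_def)
  ultimately show "\<exists>s w0. w0 \<in> Vspan B \<and> w = (\<lambda>x. s * b x + w0 x)" by blast
next
  assume "\<exists>s w0. w0 \<in> Vspan B \<and> w = (\<lambda>x. s * b x + w0 x)"
  then obtain s c where w: "w = (\<lambda>x. s * b x + (\<Sum>h\<in>B. c h * h x))" by (auto simp: Vspan_def)
  have "(\<Sum>h\<in>B. c h * h x) = (\<Sum>h\<in>B. (c(b := s)) h * h x)" for x
    using assms by (intro sum.cong) auto
  then have "w = (\<lambda>x. \<Sum>h\<in>insert b B. (c(b := s)) h * h x)" using assms w by simp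
  then show "w \<in> Vspan (insert b B)" unfolding Vspan_def by blast
qed

lemma Vspan_mono_insert:
  assumes "finite B" "b \<notin> B" "w \<in> Vspan B"
  shows "w \<in> Vspan (insert b B)"
  using assms by (subst Vspan_insert) (auto intro!: exI[of _ 0] exI[of _ w])

lemma Vspan_base:
  assumes "finite B" "b \<notin> B"
  shows "b \<in> Vspan (insert b B)"
  using assms Vspan_zero[of B] by (subst Vspan_insert) (auto intro!: exI[of _ 1] exI[of _ "\<lambda>x. 0"])

lemma Vspan_subset:
  assumes "finite B" "B \<subseteq> U" "(\<lambda>x. 0) \<in> U"
    and cl: "\<And>f g a b. f \<in> U \<Longrightarrow> g \<in> U \<Longrightarrow> (\<lambda>x. a * f x + b * g x) \<in> U"
  shows "Vspan B \<subseteq> U"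
  using assms(1,2)
proof (induction B rule: finite_induct)
  case empty then show ?case using assms(3) by (simp add: Vspan_empty)
next
  case (insert b B)
  show ?case
  proof
    fix w assume "w \<in> Vspan (insert b B)"
    then obtain s w0 where "w0 \<in> Vspan B" "w = (\<lambda>x. s * b x + 1 * w0 x)"
      using Vspan_insert[OF insert(1,2)] by auto
    moreover have "(\<lambda>x. s * b x + 1 * w0 x) \<in> U" by (rule cl) (use insert \<open>w0 \<in> Vspan B\<close> in auto)
    ultimately show "w \<in> U" by simp
  qed
qed

lemma riesz:
  fixes ip :: "(real \<Rightarrow> real) \<Rightarrow> (real \<Rightarrow> real) \<Rightarrow> real"
  assumes fin: "finite B" and BU: "B \<subseteq> U" and U0: "(\<lambda>x. 0) \<in> U"
    and cl: "\<And>f g a b. f \<in> U \<Longrightarrow> g \<in> U \<Longrightarrow> (\<lambda>x. a * f x + b * g x) \<in> U"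
    and lin: "\<And>f g h a b. f \<in> U \<Longrightarrow> g \<in> U \<Longrightarrow> h \<in> U \<Longrightarrow>
                 ip (\<lambda>x. a * f x + b * g x) h = a * ip f h + b * ip g h"
    and sym: "\<And>f g. ip f g = ip g f"
    and pd: "\<And>f. f \<in> U \<Longrightarrow> ip f f = 0 \<Longrightarrow> f = (\<lambda>x. 0)"
  shows "\<forall>\<phi>. (\<forall>f\<in>Vspan B. \<forall>g\<in>Vspan B. \<forall>a b. \<phi> (\<lambda>x. a * f x + b * g x) = a * \<phi> f + b * \<phi> g)
            \<longrightarrow> (\<exists>d\<in>Vspan B. \<forall>w\<in>Vspan B. ip w d = \<phi> w)"
  using fin BU
proof (induction B rule: finite_induct)
  case empty
  show ?case
  proof (intro allI impI)
    fix \<phi> :: "(real \<Rightarrow> real) \<Rightarrow> real"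
    assume L: "\<forall>f\<in>Vspan {}. \<forall>g\<in>Vspan {}. \<forall>a b. \<phi> (\<lambda>x. a * f x + b * g x) = a * \<phi> f + b * \<phi> g"
    have "\<phi> (\<lambda>x. 0 * 0 + 0 * 0) = 0 * \<phi> (\<lambda>x. 0) + 0 * \<phi> (\<lambda>x. 0)"
      by (rule L[rule_format, OF Vspan_zero Vspan_zero])
    then have "\<phi> (\<lambda>x. 0) = 0" by simp
    moreover have "ip (\<lambda>x. 0) (\<lambda>x. 0) = 0" using lin[OF U0 U0 U0, of 0 0] by simp
    ultimately show "\<exists>d\<in>Vspan {}. \<forall>w\<in>Vspan {}. ip w d = \<phi> w" by (simp add: Vspan_empty)
  qed
next
  case (insert b B)
  have BU': "B \<subseteq> U" using insert(4) by simp
  have fI: "finite (insert b B)" using insert(1) by simp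
  have SU: "Vspan B \<subseteq> U" by (rule Vspan_subset[OF insert(1) BU' U0 cl])
  have SU': "Vspan (insert b B) \<subseteq> U" by (rule Vspan_subset[OF fI insert(4) U0 cl])
  have bU: "b \<in> U" using insert(4) by auto
  have linr: "ip h (\<lambda>x. a * f x + c * g x) = a * ip h f + c * ip h g"
    if "f \<in> U" "g \<in> U" "h \<in> U" for f g h a c
    using lin[OF that, of a c] sym[of h "\<lambda>x. a * f x + c * g x"] sym[of h f] sym[of h g] by simp
  show ?case
  proof (intro allI impI)
    fix \<phi> :: "(real \<Rightarrow> real) \<Rightarrow> real"
    assume L: "\<forall>f\<in>Vspan (insert b B). \<forall>g\<in>Vspan (insert b B). \<forall>a c. \<phi> (\<lambda>x. a * f x + c * g x) = a * \<phi> f + c * \<phi> g"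
    have IH: "\<exists>d\<in>Vspan B. \<forall>w\<in>Vspan B. ip w d = \<psi> w"
      if "\<forall>f\<in>Vspan B. \<forall>g\<in>Vspan B. \<forall>a c. \<psi> (\<lambda>x. a * f x + c * g x) = a * \<psi> f + c * \<psi> g" for \<psi>
      using insert(3) insert(4) that by auto
    have Lb: "\<forall>f\<in>Vspan B. \<forall>g\<in>Vspan B. \<forall>a c. \<phi> (\<lambda>x. a * f x + c * g x) = a * \<phi> f + c * \<phi> g"
      using L Vspan_mono_insert[OF insert(1,2)] by blast
    obtain d0 where d0: "d0 \<in> Vspan B" "\<forall>w\<in>Vspan B. ip w d0 = \<phi> w"
      using IH[OF Lb] by blast
    have linb: "\<forall>f\<in>Vspan B. \<forall>g\<in>Vspan B. \<forall>a c. ip (\<lambda>x. a * f x + c * g x) b = a * ip f b + c * ip g b"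
      by (intro ballI allI, rule lin) (use SU bU in auto)
    obtain p where p: "p \<in> Vspan B" "\<forall>w\<in>Vspan B. ip w p = ip w b"
      using IH[OF linb] by blast
    define e where "e = (\<lambda>x. 1 * b x + (-1) * p x)"
    have pI: "p \<in> Vspan (insert b B)" using Vspan_mono_insert[OF insert(1,2) p(1)] .
    have bI: "b \<in> Vspan (insert b B)" using Vspan_base[OF insert(1,2)] .
    have eI: "e \<in> Vspan (insert b B)" unfolding e_def by (rule Vspan_lin[OF bI pI])
    have pU: "p \<in> U" and eU: "e \<in> U" using pI eI SU' by auto
    have eorth: "ip w e = 0" if w: "w \<in> Vspan B" for w
    proof -
      have wU: "w \<in> U" using w SU by auto
      have "ip w e = ip w b - ip w p" unfolding e_def using linr[OF bU pU wU, of 1 "-1"] by simp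
      then show ?thesis using p(2) w by simp
    qed
    show "\<exists>d\<in>Vspan (insert b B). \<forall>w\<in>Vspan (insert b B). ip w d = \<phi> w"
    proof (cases "ip e e = 0")
      case True
      then have "e = (\<lambda>x. 0)" using pd eU by blast
      then have bp: "b x = p x" for x
      proof -
        have "1 * b x + (-1) * p x = 0" using fun_cong[OF \<open>e = (\<lambda>x. 0)\<close>, of x] unfolding e_def by simp
        then show ?thesis by simp
      qed
      have "\<forall>w\<in>Vspan (insert b B). ip w d0 = \<phi> w"
      proof
        fix w assume "w \<in> Vspan (insert b B)"
        then obtain s w0 where w0: "w0 \<in> Vspan B" "w = (\<lambda>x. s * b x + w0 x)"
          using Vspan_insert[OF insert(1,2)] by auto
        have "w = (\<lambda>x. s * p x + 1 * w0 x)" using w0 bp by simp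
        then have "w \<in> Vspan B" using Vspan_lin[OF p(1) w0(1), of s 1] by simp
        then show "ip w d0 = \<phi> w" using d0 by simp
      qed
      then show ?thesis using d0(1) Vspan_mono_insert[OF insert(1,2)] by blast
    next
      case False
      define t where "t = (\<phi> b - ip b d0) / ip e e"
      define d where "d = (\<lambda>x. 1 * d0 x + t * e x)"
      have d0I: "d0 \<in> Vspan (insert b B)" using Vspan_mono_insert[OF insert(1,2) d0(1)] .
      have d0U: "d0 \<in> U" using d0I SU' by auto
      have dI: "d \<in> Vspan (insert b B)" unfolding d_def by (rule Vspan_lin[OF d0I eI])
      have ebe: "ip b e = ip e e"
      proof -
        have "ip e e = ip e b - ip e p" unfolding e_def[of] using linr[OF bU pU eU, of 1 "-1"]
          by (simp add: e_def)
        also have "ip e p = 0" using eorth[OF p(1)] sym[of e p] by simp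
        finally show ?thesis using sym[of e b] by simp
      qed
      have "\<forall>w\<in>Vspan (insert b B). ip w d = \<phi> w"
      proof
        fix w assume "w \<in> Vspan (insert b B)"
        then obtain s w0 where w0: "w0 \<in> Vspan B" "w = (\<lambda>x. s * b x + w0 x)"
          using Vspan_insert[OF insert(1,2)] by auto
        have w0U: "w0 \<in> U" using w0 SU by auto
        have w0I: "w0 \<in> Vspan (insert b B)" using Vspan_mono_insert[OF insert(1,2) w0(1)] .
        have ww: "w = (\<lambda>x. s * b x + 1 * w0 x)" using w0 by simp
        have wU: "w \<in> U" using SU' \<open>w \<in> Vspan (insert b B)\<close> by auto
        have "ip w d = ip w d0 + t * ip w e" unfolding d_def
          using linr[OF d0U eU wU, of 1 t] by simp
        also have "ip w d0 = s * ip b d0 + ip w0 d0" unfolding ww using lin[OF bU w0U d0U, of s 1] by simp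
        also have "ip w e = s * ip b e + ip w0 e" unfolding ww using lin[OF bU w0U eU, of s 1] by simp
        finally have "ip w d = s * ip b d0 + \<phi> w0 + t * (s * ip e e)"
          using d0(2) w0(1) eorth[OF w0(1)] ebe by simp
        also have "\<dots> = s * \<phi> b + \<phi> w0" using False by (simp add: t_def field_simps)
        also have "\<dots> = \<phi> w" unfolding ww using L[rule_format, OF bI w0I, of s 1] by simp
        finally show "ip w d = \<phi> w" .
      qed
      then show ?thesis using dI by blast
    qed
  qed
qed

lemma sum_fun_apply: "(\<Sum>a\<in>A. f a) x = (\<Sum>a\<in>A. f a x :: real)"
  for f :: "'b \<Rightarrow> real \<Rightarrow> real"
  by (induction A rule: infinite_finite_induct) (auto simp: plus_fun_def zero_fun_def)

interpretation FV: vector_space "\<lambda>(c::real) (f::real \<Rightarrow> real) (x::real). c * f x"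
  by unfold_locales (auto simp: fun_eq_iff algebra_simps plus_fun_def)

lemma FV_span_eq: "finite S \<Longrightarrow> FV.span S = Vspan S"
  by (auto simp: FV.span_finite Vspan_def sum_fun_apply fun_eq_iff)

lemma Vspan_base': "b \<in> S \<Longrightarrow> finite S \<Longrightarrow> b \<in> Vspan S"
proof -
  assume "b \<in> S" "finite S"
  have e: "(\<Sum>h\<in>S. (if h = b then 1 else 0) * h x) = (\<Sum>h\<in>S. if h = b then b x else 0)" for x
    by (rule sum.cong) auto
  have eq: "b = (\<lambda>x. \<Sum>h\<in>S. (if h = b then 1 else 0) * h x)"
    unfolding e using \<open>b \<in> S\<close> \<open>finite S\<close> by simp
  show ?thesis unfolding Vspan_def mem_Collect_eq
    by (rule exI[of _ "\<lambda>h. if h = b then 1 else 0"]) (rule eq)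
qed

lemma Vspan_sum:
  assumes "finite A" "\<forall>i\<in>A. f i \<in> Vspan S"
  shows "(\<lambda>x. \<Sum>i\<in>A. f i x) \<in> Vspan S"
  using assms
proof (induction A rule: finite_induct)
  case empty then show ?case using Vspan_zero by simp
next
  case (insert a A)
  then have "(\<lambda>x. 1 * f a x + 1 * (\<Sum>i\<in>A. f i x)) \<in> Vspan S"
    by (intro Vspan_lin) auto
  then show ?case using insert by simp
qed

lemma C1_cont: "f C1_differentiable_on UNIV \<Longrightarrow> continuous_on UNIV f"
  by (rule C1_differentiable_imp_continuous_on)

lemma VC1_lin: "f \<in> VC1 l \<Longrightarrow> g \<in> VC1 l \<Longrightarrow> (\<lambda>x. a * f x + b * g x) \<in> VC1 l"
  unfolding VC1_def by (auto intro!: Vspan_lin derivative_intros)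

lemma VC1_zero: "(\<lambda>x. 0) \<in> VC1 l"
  unfolding VC1_def using Vspan_zero by auto

lemma UR_lin:
  assumes "f \<in> UR l G n" "g \<in> UR l G n"
  shows "(\<lambda>x. a * f x + b * g x) \<in> UR l G n"
proof -
  obtain v where v: "f = pw G n v" "\<forall>j<n. v j \<in> VC1 l" using assms(1) by (auto simp: UR_def)
  obtain w where w: "g = pw G n w" "\<forall>j<n. w j \<in> VC1 l" using assms(2) by (auto simp: UR_def)
  have "(\<lambda>x. a * f x + b * g x) = pw G n (\<lambda>j x. a * v j x + b * w j x)"
    unfolding v w by (rule pw_lin)
  moreover have "\<forall>j<n. (\<lambda>x. a * v j x + b * w j x) \<in> VC1 l" using v w VC1_lin by blast
  ultimately show ?thesis unfolding UR_def by blast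
qed

lemma UR_zero: "(\<lambda>x. 0) \<in> UR l G n"
proof -
  have "(\<lambda>x. 0) = pw G n (\<lambda>j x. 0)" by (simp add: pw_def fun_eq_iff)
  then show ?thesis unfolding UR_def using VC1_zero by blast
qed

lemma UR_GD: "f \<in> UR l G n \<Longrightarrow> f \<in> GD G n"
  unfolding UR_def GD_def VC1_def using C1_cont by blast

lemma UR_fin:
  assumes fin: "finite l"
  shows "\<exists>B. finite B \<and> B \<subseteq> UR l G n \<and> UR l G n = Vspan B"
proof -
  define F where "F = (\<lambda>(j, g). \<lambda>x. g x * indicator (cell G j) x) ` ({..<n} \<times> l)"
  have fF: "finite F" unfolding F_def using fin by auto
  have sub: "UR l G n \<subseteq> Vspan F"
  proof
    fix u assume "u \<in> UR l G n"
    then obtain v where v: "u = pw G n v" "\<forall>j<n. v j \<in> VC1 l" by (auto simp: UR_def)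
    have "\<forall>j. \<exists>c. j < n \<longrightarrow> v j = (\<lambda>x. \<Sum>g\<in>l. c g * g x)" using v(2) by (auto simp: VC1_def Vspan_def)
    from choice[OF this] obtain c where c: "\<forall>j<n. v j = (\<lambda>x. \<Sum>g\<in>l. c j g * g x)" by blast
    have "u = (\<lambda>x. \<Sum>j<n. (\<Sum>g\<in>l. c j g * (g x * indicator (cell G j) x)))"
      using c unfolding v pw_def by (auto simp: fun_eq_iff sum_distrib_right mult.assoc intro!: sum.cong)
    also have "\<dots> \<in> Vspan F"
    proof (intro Vspan_sum ballI)
      fix j g assume "j \<in> {..<n}" "g \<in> l"
      then have "(\<lambda>x. g x * indicator (cell G j) x) \<in> Vspan F"
        by (intro Vspan_base' fF) (auto simp: F_def)
      then have "(\<lambda>x. c j g * (g x * indicator (cell G j) x) + 0 * (g x * indicator (cell G j) x)) \<in> Vspan F"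
        by (intro Vspan_lin)
      then show "(\<lambda>x. c j g * (g x * indicator (cell G j) x)) \<in> Vspan F" by simp
    qed (use fin in auto)
    finally show "u \<in> Vspan F" .
  qed
  have subsp: "FV.subspace (UR l G n)"
    unfolding FV.subspace_def
  proof (intro conjI ballI allI)
    show "0 \<in> UR l G n" using UR_zero[of l G n] by (simp add: zero_fun_def)
  next
    fix x y assume "x \<in> UR l G n" "y \<in> UR l G n"
    then have "(\<lambda>z. 1 * x z + 1 * y z) \<in> UR l G n" by (rule UR_lin)
    then show "x + y \<in> UR l G n" by (simp add: plus_fun_def)
  next
    fix c :: real and x assume "x \<in> UR l G n"
    then have "(\<lambda>z. c * x z + 0 * x z) \<in> UR l G n" by (intro UR_lin)
    then show "(\<lambda>z. c * x z) \<in> UR l G n" by simp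
  qed
  obtain B where B: "B \<subseteq> UR l G n" "FV.independent B" "UR l G n \<subseteq> FV.span B"
    using FV.maximal_independent_subset[of "UR l G n"] by blast
  have "finite B" using FV.independent_span_bound[OF fF B(2)] B(1) sub FV_span_eq[OF fF] by auto
  moreover have "FV.span B \<subseteq> UR l G n" using FV.span_minimal[OF B(1) subsp] .
  ultimately show ?thesis using B FV_span_eq by (intro exI[of _ B]) auto
qed

lemma VC1_cont: "f \<in> VC1 l \<Longrightarrow> continuous_on UNIV f"
  unfolding VC1_def using C1_cont by blast

lemma VC1_isCont: "f \<in> VC1 l \<Longrightarrow> isCont f x"
  using VC1_cont continuous_on_eq_continuous_at[of UNIV f] by blast

lemma UR_zero_test:
  assumes st: "\<forall>j<n. G j < G (Suc j)" and q: "q \<in> UR l G n" and z: "\<forall>w\<in>UR l G n. ipU G n q w = 0"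
  shows "q = (\<lambda>x. 0)"
  using GD_pd[OF st UR_GD[OF q]] z q by blast

lemma UR_riesz:
  assumes fin: "finite l" and st: "\<forall>j<n. G j < G (Suc j)"
    and phi: "\<forall>f\<in>UR l G n. \<forall>g\<in>UR l G n. \<forall>a b. \<phi> (\<lambda>x. a * f x + b * g x) = a * \<phi> f + b * \<phi> g"
  shows "\<exists>d\<in>UR l G n. \<forall>w\<in>UR l G n. ipU G n w d = \<phi> w"
proof -
  obtain B where B: "finite B" "B \<subseteq> UR l G n" "UR l G n = Vspan B" using UR_fin[OF fin] by blast
  have "\<forall>\<phi>. (\<forall>f\<in>Vspan B. \<forall>g\<in>Vspan B. \<forall>a b. \<phi> (\<lambda>x. a * f x + b * g x) = a * \<phi> f + b * \<phi> g)
            \<longrightarrow> (\<exists>d\<in>Vspan B. \<forall>w\<in>Vspan B. ipU G n w d = \<phi> w)"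
  proof (rule riesz[OF B(1,2) UR_zero])
    show "\<And>f g a b. f \<in> UR l G n \<Longrightarrow> g \<in> UR l G n \<Longrightarrow> (\<lambda>x. a * f x + b * g x) \<in> UR l G n"
      by (rule UR_lin)
    show "\<And>f g h a b. f \<in> UR l G n \<Longrightarrow> g \<in> UR l G n \<Longrightarrow> h \<in> UR l G n \<Longrightarrow>
          ipU G n (\<lambda>x. a * f x + b * g x) h = a * ipU G n f h + b * ipU G n g h"
      by (rule GD_lin[OF st]) (auto intro: UR_GD)
    show "\<And>f g. ipU G n f g = ipU G n g f" by (rule ip_sym)
    show "\<And>f. f \<in> UR l G n \<Longrightarrow> ipU G n f f = 0 \<Longrightarrow> f = (\<lambda>x. 0)"
      by (rule GD_pd[OF st]) (auto intro: UR_GD)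
  qed
  then show ?thesis using phi B(3) by auto
qed

lemma proj_spec:
  assumes fin: "finite l" and st: "\<forall>j<n. G j < G (Suc j)" and f: "f \<in> GD G n"
  shows "projU l G n f \<in> UR l G n \<and> (\<forall>w\<in>UR l G n. ipU G n (\<lambda>x. f x - projU l G n f x) w = 0)"
proof -
  let ?P = "\<lambda>p. p \<in> UR l G n \<and> (\<forall>w\<in>UR l G n. ipU G n (\<lambda>x. f x - p x) w = 0)"
  have phi: "\<forall>g\<in>UR l G n. \<forall>h\<in>UR l G n. \<forall>a b. ipU G n f (\<lambda>x. a * g x + b * h x) = a * ipU G n f g + b * ipU G n f h"
  proof (intro ballI allI)
    fix g h a b assume g: "g \<in> UR l G n" and h: "h \<in> UR l G n"
    have "ipU G n f (\<lambda>x. a * g x + b * h x) = ipU G n (\<lambda>x. a * g x + b * h x) f" by (rule ip_sym)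
    also have "\<dots> = a * ipU G n g f + b * ipU G n h f" by (rule GD_lin[OF st UR_GD[OF g] UR_GD[OF h] f])
    also have "\<dots> = a * ipU G n f g + b * ipU G n f h" by (simp add: ip_sym[of G n g f] ip_sym[of G n h f])
    finally show "ipU G n f (\<lambda>x. a * g x + b * h x) = a * ipU G n f g + b * ipU G n f h" .
  qed
  obtain d where d: "d \<in> UR l G n" "\<forall>w\<in>UR l G n. ipU G n w d = ipU G n f w"
    using UR_riesz[OF fin st phi] by blast
  have dif: "ipU G n (\<lambda>x. f x - p x) w = ipU G n f w - ipU G n p w" if "p \<in> UR l G n" "w \<in> UR l G n" for p w
    using GD_lin[OF st f UR_GD[OF that(1)] UR_GD[OF that(2)], of 1 "-1"] by simp
  have ex: "?P d"
  proof (intro conjI ballI)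
    fix w assume w: "w \<in> UR l G n"
    show "ipU G n (\<lambda>x. f x - d x) w = 0" using dif[OF d(1) w] d(2) w ip_sym[of G n d w] by simp
  qed (rule d(1))
  have un: "p = d" if "?P p" for p
  proof -
    have q: "(\<lambda>x. d x - p x) \<in> UR l G n" using UR_lin[OF d(1), of p 1 "-1"] that by simp
    have "\<forall>w\<in>UR l G n. ipU G n (\<lambda>x. d x - p x) w = 0"
    proof
      fix w assume w: "w \<in> UR l G n"
      have "ipU G n (\<lambda>x. d x - p x) w = ipU G n d w - ipU G n p w"
        using GD_lin[OF st UR_GD[OF d(1)] UR_GD[OF that[THEN conjunct1]] UR_GD[OF w], of 1 "-1"] by simp
      also have "\<dots> = 0"
      proof -
        have "ipU G n (\<lambda>x. f x - p x) w = 0" using that w by blast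
        moreover have "ipU G n (\<lambda>x. f x - d x) w = 0" using ex w by blast
        ultimately show ?thesis using dif[OF that[THEN conjunct1] w] dif[OF d(1) w] by simp
      qed
      finally show "ipU G n (\<lambda>x. d x - p x) w = 0" .
    qed
    then have "(\<lambda>x. d x - p x) = (\<lambda>x. 0)" using UR_zero_test[OF st q] by blast
    then have "d x = p x" for x using fun_cong[OF \<open>(\<lambda>x. d x - p x) = (\<lambda>x. 0)\<close>, of x] by simp
    then show ?thesis by (simp add: fun_eq_iff)
  qed
  have "?P (THE p. ?P p)" by (rule theI[of ?P d, OF ex un])
  then show ?thesis unfolding projU_def .
qed

lemma delta_spec:
  assumes fin: "finite l" and st: "\<forall>j<n. G j < G (Suc j)" and m: "m < n"
  shows "deltaU l G n (G m) \<in> UR l G n \<and> (\<forall>w\<in>UR l G n. ipU G n w (deltaU l G n (G m)) = gval G n w (G m))"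
proof -
  let ?P = "\<lambda>d. d \<in> UR l G n \<and> (\<forall>w\<in>UR l G n. ipU G n w d = gval G n w (G m))"
  have gv: "gval G n f (G m) = (v (min m (n - 1)) (G m) + v (m - 1) (G m)) / 2"
    if "f = pw G n v" "\<forall>j<n. v j \<in> VC1 l" for f v
    unfolding that(1) by (rule gval_pw[OF st _ less_imp_le[OF m]]) (use m that(2) VC1_isCont in auto)
  have phi: "\<forall>f\<in>UR l G n. \<forall>g\<in>UR l G n. \<forall>a b. gval G n (\<lambda>x. a * f x + b * g x) (G m) = a * gval G n f (G m) + b * gval G n g (G m)"
  proof (intro ballI allI)
    fix f g a b assume "f \<in> UR l G n" "g \<in> UR l G n"
    then obtain v w where v: "f = pw G n v" "\<forall>j<n. v j \<in> VC1 l" and w: "g = pw G n w" "\<forall>j<n. w j \<in> VC1 l"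
      by (auto simp: UR_def)
    have e: "(\<lambda>x. a * f x + b * g x) = pw G n (\<lambda>j x. a * v j x + b * w j x)" unfolding v w by (rule pw_lin)
    show "gval G n (\<lambda>x. a * f x + b * g x) (G m) = a * gval G n f (G m) + b * gval G n g (G m)"
    proof -
      have c: "\<forall>j<n. (\<lambda>x. a * v j x + b * w j x) \<in> VC1 l" using v(2) w(2) VC1_lin by blast
      show ?thesis unfolding gv[OF e c] gv[OF v] gv[OF w] by (simp add: field_simps)
    qed
  qed
  obtain d where d: "?P d" using UR_riesz[OF fin st phi] by blast
  have un: "p = d" if "?P p" for p
  proof -
    have q: "(\<lambda>x. d x - p x) \<in> UR l G n" using UR_lin[of d l G n p 1 "-1"] that d by simp
    have "\<forall>w\<in>UR l G n. ipU G n (\<lambda>x. d x - p x) w = 0"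
    proof
      fix w assume w: "w \<in> UR l G n"
      have "ipU G n (\<lambda>x. d x - p x) w = ipU G n d w - ipU G n p w"
        using GD_lin[OF st UR_GD[OF d[THEN conjunct1]] UR_GD[OF that[THEN conjunct1]] UR_GD[OF w], of 1 "-1"] by simp
      also have "\<dots> = 0" using that w d ip_sym[of G n d w] ip_sym[of G n p w] by simp
      finally show "ipU G n (\<lambda>x. d x - p x) w = 0" .
    qed
    then have "(\<lambda>x. d x - p x) = (\<lambda>x. 0)" using UR_zero_test[OF st q] by blast
    then have "d x = p x" for x using fun_cong[OF \<open>(\<lambda>x. d x - p x) = (\<lambda>x. 0)\<close>, of x] by simp
    then show ?thesis by (simp add: fun_eq_iff)
  qed
  have "?P (THE p. ?P p)" by (rule theI[of ?P d, OF d un])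
  then show ?thesis unfolding deltaU_def .
qed

lemma telescope:
  fixes R Lf :: "nat \<Rightarrow> real"
  assumes "ia < k"
  shows "(\<Sum>j\<in>{ia..<k}. Lf (Suc j) - R j)
    + (\<Sum>m\<in>{ia..k}. (R m - Lf m) * (of_bool (ia \<le> m \<and> m < k) + of_bool (ia < m \<and> m \<le> k)) / 2)
    = (R k + Lf k) / 2 - (R ia + Lf ia) / 2"
  using assms
proof (induction k)
  case 0 then show ?case by simp
next
  case (Suc k)
  show ?case
  proof (cases "k = ia")
    case True
    have s2: "{ia..Suc ia} = {ia, Suc ia}" by auto
    show ?thesis unfolding True s2 by (simp add: field_simps)
  next
    case False
    then have lt: "ia < k" using Suc(2) by simp
    have a: "{ia..<Suc k} = insert k {ia..<k}" using lt by auto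
    have b: "{ia..Suc k} = insert (Suc k) {ia..k}" using lt by auto
    have c: "(\<Sum>m\<in>{ia..k}. (R m - Lf m) * (of_bool (ia \<le> m \<and> m < Suc k) + of_bool (ia < m \<and> m \<le> Suc k)) / 2)
       = (\<Sum>m\<in>{ia..k}. (R m - Lf m) * (of_bool (ia \<le> m \<and> m < k) + of_bool (ia < m \<and> m \<le> k)) / 2
           + (if m = k then (R k - Lf k) / 2 else 0))"
      by (rule sum.cong) (use lt in \<open>auto simp: field_simps\<close>)
    have d: "(\<Sum>m\<in>{ia..k}. (if m = k then X else 0)) = (X::real)" for X
      using lt by simp
    note IH = Suc(1)[OF lt]
    have e1: "(\<Sum>j\<in>{ia..<Suc k}. Lf (Suc j) - R j) = (Lf (Suc k) - R k) + (\<Sum>j\<in>{ia..<k}. Lf (Suc j) - R j)"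
      unfolding a by simp
    have e2: "(\<Sum>m\<in>{ia..Suc k}. (R m - Lf m) * (of_bool (ia \<le> m \<and> m < Suc k) + of_bool (ia < m \<and> m \<le> Suc k)) / 2)
      = (R (Suc k) - Lf (Suc k)) / 2 + (\<Sum>m\<in>{ia..k}. (R m - Lf m) * (of_bool (ia \<le> m \<and> m < Suc k) + of_bool (ia < m \<and> m \<le> Suc k)) / 2)"
      unfolding b using lt by simp
    have e3: "(\<Sum>m\<in>{ia..k}. (R m - Lf m) * (of_bool (ia \<le> m \<and> m < Suc k) + of_bool (ia < m \<and> m \<le> Suc k)) / 2)
      = (\<Sum>m\<in>{ia..k}. (R m - Lf m) * (of_bool (ia \<le> m \<and> m < k) + of_bool (ia < m \<and> m \<le> k)) / 2) + (R k - Lf k) / 2"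
      unfolding c sum.distrib d ..
    show ?thesis unfolding e1 e2 e3 using IH by (simp add: field_simps)
  qed
qed

lemma VC1_deriv:
  assumes "f \<in> VC1 l"
  shows "continuous_on UNIV (deriv f)" "\<And>x. (f has_real_derivative deriv f x) (at x)"
proof -
  have C: "f C1_differentiable_on UNIV" using assms unfolding VC1_def by blast
  then have dc: "(\<forall>x\<in>UNIV. f differentiable at x) \<and> continuous_on UNIV (\<lambda>x. vector_derivative f (at x))"
    by (rule C1_differentiable_on_eq[THEN iffD1])
  then have d: "\<And>x. f differentiable at x" and c: "continuous_on UNIV (\<lambda>x. vector_derivative f (at x))"
    by simp_all
  show D: "\<And>x. (f has_real_derivative deriv f x) (at x)"
    by (rule DERIV_deriv_iff_real_differentiable[THEN iffD2, OF d])
  have "vector_derivative f (at x) = deriv f x" for x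
    by (rule vector_derivative_at[OF has_real_derivative_iff_has_vector_derivative[THEN iffD1, OF D[of x]]])
  then have e: "(\<lambda>x. vector_derivative f (at x)) = deriv f" by (rule ext)
  show "continuous_on UNIV (deriv f)" using c unfolding e .
qed

lemma VC1_FTC:
  assumes "f \<in> VC1 l" "a \<le> b"
  shows "(LBINT x=a..b. deriv f x) = f b - f a"
proof (rule interval_integral_FTC_finite)
  show "continuous_on {min a b..max a b} (deriv f)"
    by (rule continuous_on_subset[OF VC1_deriv(1)[OF assms(1)] subset_UNIV])
  fix x
  show "(f has_vector_derivative deriv f x) (at x within {min a b..max a b})"
    by (rule has_vector_derivative_at_within[OF has_real_derivative_iff_has_vector_derivative[THEN iffD1, OF VC1_deriv(2)[OF assms(1), of x]]])
qed

lemma pder_pw: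
  assumes st: "\<forall>j<n. G j < G (Suc j)"
  shows "pder G n (pw G n v) = pw G n (\<lambda>j. deriv (v j))"
proof
  fix x
  show "pder G n (pw G n v) x = pw G n (\<lambda>j. deriv (v j)) x"
  proof (cases "\<exists>j0<n. x \<in> cell G j0")
    case True
    then obtain j0 where j0: "j0 < n" "x \<in> cell G j0" by blast
    have ev: "eventually (\<lambda>y. pw G n v y = v j0 y) (nhds x)"
      using eventually_nhds_in_open[of "cell G j0" x] j0
      by (auto elim!: eventually_mono simp: pw_cell[OF st j0(1)])
    have "deriv (pw G n v) x = deriv (v j0) x" by (rule deriv_cong_ev[OF ev refl])
    have "pder G n (pw G n v) x = (if j0 \<in> {..<n} then deriv (pw G n v) x else 0)"
      unfolding pder_def by (rule sum_cell[OF st _ _ j0]) auto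
    also have "\<dots> = deriv (v j0) x" using j0 \<open>deriv (pw G n v) x = deriv (v j0) x\<close> by simp
    finally show ?thesis using pw_cell[OF st j0] by simp
  next
    case False
    have "pder G n (pw G n v) x = 0" unfolding pder_def by (rule sum_out[of _ n]) (use False in auto)
    then show ?thesis using pw_out[of n x G] False by auto
  qed
qed

lemma GD_sum_closed:
  assumes "finite A" "\<forall>i\<in>A. f i \<in> GD G n"
  shows "(\<lambda>x. \<Sum>i\<in>A. c i * f i x) \<in> GD G n"
  using assms
proof (induction A rule: finite_induct)
  case empty
  have "(\<lambda>x. 0) = pw G n (\<lambda>j x. 0)" by (simp add: pw_def fun_eq_iff)
  then show ?case unfolding GD_def by auto
next
  case (insert a A)
  then have "(\<lambda>x. c a * f a x + 1 * (\<Sum>i\<in>A. c i * f i x)) \<in> GD G n"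
    by (intro GD_lin_closed) auto
  then show ?case using insert by simp
qed

lemma GD_sum_lin:
  assumes st: "\<forall>j<n. G j < G (Suc j)" and "finite A" "\<forall>i\<in>A. f i \<in> GD G n" and h: "h \<in> GD G n"
  shows "ipU G n (\<lambda>x. \<Sum>i\<in>A. c i * f i x) h = (\<Sum>i\<in>A. c i * ipU G n (f i) h)"
  using assms(2,3)
proof (induction A rule: finite_induct)
  case empty
  have z: "(\<lambda>x. 0) = pw G n (\<lambda>j x. 0)" by (simp add: pw_def fun_eq_iff)
  have "(\<lambda>x::real. 0::real) \<in> GD G n" unfolding GD_def using z by auto
  note L = GD_lin[OF st this this h, of 0 0]
  then show ?case by simp
next
  case (insert a A)
  have fa: "f a \<in> GD G n" using insert(4) by simp
  have s: "(\<lambda>x. \<Sum>i\<in>A. c i * f i x) \<in> GD G n" using insert(1,4) by (intro GD_sum_closed) auto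
  note L = GD_lin[OF st fa s h, of "c a" 1]
  have IH: "ipU G n (\<lambda>x. \<Sum>i\<in>A. c i * f i x) h = (\<Sum>i\<in>A. c i * ipU G n (f i) h)"
    using insert(3,4) by simp
  show ?case using L IH insert(1,2) by simp
qed

lemma UR_sum_closed:
  assumes "finite A" "\<forall>i\<in>A. f i \<in> UR l G n"
  shows "(\<lambda>x. \<Sum>i\<in>A. c i * f i x) \<in> UR l G n"
  using assms
proof (induction A rule: finite_induct)
  case empty then show ?case using UR_zero by simp
next
  case (insert a A)
  then have "(\<lambda>x. c a * f a x + 1 * (\<Sum>i\<in>A. c i * f i x)) \<in> UR l G n"
    by (intro UR_lin) auto
  then show ?case using insert by simp
qed

definition chi :: "nat \<Rightarrow> nat \<Rightarrow> nat \<Rightarrow> real \<Rightarrow> real" where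
  "chi ia ib j x = (if ia \<le> j \<and> j < ib then 1 else 0)"

lemma int_chi:
  assumes st: "\<forall>j<n. G j < G (Suc j)" and f: "f \<in> GD G n" and ib: "ia \<le> ib" "ib \<le> n"
  shows "(LBINT x=G ia..G ib. f x) = ipU G n f (pw G n (chi ia ib))"
proof -
  obtain v where v: "f = pw G n v" "\<forall>j<n. continuous_on UNIV (v j)" using f by (auto simp: GD_def)
  have cc: "\<forall>j<n. continuous_on UNIV (chi ia ib j)" by (auto simp: chi_def)
  have "(LBINT x=G ia..G ib. f x) = (\<Sum>j\<in>{ia..<ib}. LBINT x=G j..G (Suc j). v j x)"
    unfolding v by (rule int_pw[OF st ib v(2)])
  also have "\<dots> = (\<Sum>j<n. LBINT x=G j..G (Suc j). v j x * chi ia ib j x)"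
  proof -
    have "(\<Sum>j<n. LBINT x=G j..G (Suc j). v j x * chi ia ib j x) = (\<Sum>j<n. if j \<in> {ia..<ib} then LBINT x=G j..G (Suc j). v j x else 0)"
      by (rule sum.cong) (auto simp: chi_def)
    also have "\<dots> = (\<Sum>j\<in>{..<n} \<inter> {ia..<ib}. LBINT x=G j..G (Suc j). v j x)"
      by (rule sum.inter_restrict[symmetric]) simp
    also have "{..<n} \<inter> {ia..<ib} = {ia..<ib}" using ib by auto
    finally show ?thesis by simp
  qed
  also have "\<dots> = ipU G n f (pw G n (chi ia ib))"
    unfolding v by (rule ip_pw[OF st v(2) cc, symmetric])
  finally show ?thesis .
qed

lemma main_level:
  assumes fin: "finite l" and one: "(\<lambda>x. 1) \<in> l" and st: "\<forall>j<n. G j < G (Suc j)"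
    and u: "u \<in> UR l G n" and ab: "ia < ib" "ib \<le> n"
  shows "(LBINT x=G ia..G ib. DU l G n u x) = gval G n u (G ib) - gval G n u (G ia)"
proof -
  obtain v where v: "u = pw G n v" "\<forall>j<n. v j \<in> VC1 l" using u by (auto simp: UR_def)
  have n: "0 < n" using ab by simp
  have visc: "\<forall>j<n. \<forall>x. isCont (v j) x" using v(2) VC1_isCont by blast
  define P where "P = projU l G n (pder G n u)"
  define \<delta> where "\<delta> m = deltaU l G n (G m)" for m
  define J where "J m = jumpU G u m" for m
  define Ch where "Ch = pw G n (chi ia ib)"
  have pd: "pder G n u = pw G n (\<lambda>j. deriv (v j))" unfolding v(1) by (rule pder_pw[OF st])
  have pdGD: "pder G n u \<in> GD G n"
    unfolding pd GD_def using v(2) VC1_deriv(1) by blast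
  have Pp: "P \<in> UR l G n" "\<forall>w\<in>UR l G n. ipU G n (\<lambda>x. pder G n u x - P x) w = 0"
    using proj_spec[OF fin st pdGD] unfolding P_def by auto
  have dl: "\<delta> m \<in> UR l G n" "\<forall>w\<in>UR l G n. ipU G n w (\<delta> m) = gval G n w (G m)" if "m \<in> {1..<n}" for m
    using delta_spec[OF fin st, of m] that unfolding \<delta>_def by auto
  have chiVC: "chi ia ib j \<in> VC1 l" for j
  proof -
    have e: "chi ia ib j = (if ia \<le> j \<and> j < ib then (\<lambda>x. 1) else (\<lambda>x. 0))" by (auto simp: chi_def fun_eq_iff)
    have "(\<lambda>x. 1) \<in> VC1 l" unfolding VC1_def using Vspan_base'[OF one fin] by auto
    then show ?thesis unfolding e using VC1_zero by auto
  qed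
  have chiUR: "Ch \<in> UR l G n" unfolding Ch_def UR_def using chiVC by blast
  have chiGD: "Ch \<in> GD G n" by (rule UR_GD[OF chiUR])
  have S: "(\<lambda>x. \<Sum>m\<in>{1..<n}. J m * \<delta> m x) \<in> GD G n"
    by (rule GD_sum_closed) (auto intro!: UR_GD dl(1))
  have PGD: "P \<in> GD G n" by (rule UR_GD[OF Pp(1)])
  have DUe: "DU l G n u = (\<lambda>x. 1 * P x + 1 * (\<Sum>m\<in>{1..<n}. J m * \<delta> m x))"
    unfolding DU_def P_def \<delta>_def J_def by simp
  have DUGD: "DU l G n u \<in> GD G n" unfolding DUe by (rule GD_lin_closed[OF PGD S])
  have "(LBINT x=G ia..G ib. DU l G n u x) = ipU G n (DU l G n u) Ch"
    unfolding Ch_def by (rule int_chi[OF st DUGD]) (use ab in auto)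
  also have "\<dots> = ipU G n P Ch + ipU G n (\<lambda>x. \<Sum>m\<in>{1..<n}. J m * \<delta> m x) Ch"
    unfolding DUe using GD_lin[OF st PGD S chiGD, of 1 1] by simp
  also have "ipU G n (\<lambda>x. \<Sum>m\<in>{1..<n}. J m * \<delta> m x) Ch = (\<Sum>m\<in>{1..<n}. J m * ipU G n (\<delta> m) Ch)"
    by (rule GD_sum_lin[OF st _ _ chiGD]) (auto intro!: UR_GD dl(1))
  also have "ipU G n P Ch = ipU G n (pder G n u) Ch"
  proof -
    have "ipU G n (\<lambda>x. 1 * pder G n u x + (-1) * P x) Ch = 1 * ipU G n (pder G n u) Ch + (-1) * ipU G n P Ch"
      by (rule GD_lin[OF st pdGD PGD chiGD])
    moreover have "ipU G n (\<lambda>x. pder G n u x - P x) Ch = 0" using Pp(2) chiUR by blast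
    ultimately show ?thesis by simp
  qed
  also have "ipU G n (pder G n u) Ch = (LBINT x=G ia..G ib. pder G n u x)"
    unfolding Ch_def by (rule int_chi[OF st pdGD, symmetric]) (use ab in auto)
  also have "\<dots> = (\<Sum>j\<in>{ia..<ib}. LBINT x=G j..G (Suc j). deriv (v j) x)"
    unfolding pd by (rule int_pw[OF st]) (use ab v(2) VC1_deriv(1) in auto)
  also have "\<dots> = (\<Sum>j\<in>{ia..<ib}. v j (G (Suc j)) - v j (G j))"
  proof (rule sum.cong[OF refl])
    fix j assume "j \<in> {ia..<ib}"
    then have j: "j < n" using ab by auto
    show "(LBINT x=G j..G (Suc j). deriv (v j) x) = v j (G (Suc j)) - v j (G j)"
      by (rule VC1_FTC) (use v(2) j st in \<open>auto intro: less_imp_le\<close>)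
  qed
  finally have main: "(LBINT x=G ia..G ib. DU l G n u x) =
      (\<Sum>j\<in>{ia..<ib}. v j (G (Suc j)) - v j (G j)) + (\<Sum>m\<in>{1..<n}. J m * ipU G n (\<delta> m) Ch)" .
  define R where "R k = v (min k (n - 1)) (G k)" for k
  define Lf where "Lf k = v (k - 1) (G k)" for k
  define cc where "cc m = (of_bool (ia \<le> m \<and> m < ib) + of_bool (ia < m \<and> m \<le> ib) :: real)" for m
  have s1: "(\<Sum>j\<in>{ia..<ib}. v j (G (Suc j)) - v j (G j)) = (\<Sum>j\<in>{ia..<ib}. Lf (Suc j) - R j)"
    by (rule sum.cong) (use ab in \<open>auto simp: R_def Lf_def min_def\<close>)
  have s2: "J m * ipU G n (\<delta> m) Ch = (R m - Lf m) * cc m / 2" if m: "m \<in> {1..<n}" for m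
  proof -
    have J: "J m = R m - Lf m" unfolding J_def v(1) R_def Lf_def
      using jump_pw[OF st _ _ visc, of m] m by (auto simp: min_def)
    have "ipU G n (\<delta> m) Ch = ipU G n Ch (\<delta> m)" by (rule ip_sym)
    also have "\<dots> = gval G n Ch (G m)" using dl(2)[OF m] chiUR by blast
    also have "\<dots> = (chi ia ib (min m (n - 1)) (G m) + chi ia ib (m - 1) (G m)) / 2"
      unfolding Ch_def by (rule gval_pw[OF st n]) (use m VC1_isCont[OF chiVC] in auto)
    also have "\<dots> = cc m / 2" using m by (auto simp: chi_def cc_def min_def)
    finally show ?thesis using J by simp
  qed
  have Z: "\<forall>i\<in>{..n} - {1..<n}. (R i - Lf i) * cc i / 2 = 0"
  proof
    fix i assume "i \<in> {..n} - {1..<n}"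
    then have "i = 0 \<or> i = n" by auto
    then have "R i = Lf i" using n by (auto simp: R_def Lf_def)
    then show "(R i - Lf i) * cc i / 2 = 0" by simp
  qed
  have s3: "(\<Sum>m\<in>{1..<n}. (R m - Lf m) * cc m / 2) = (\<Sum>m\<in>{..n}. (R m - Lf m) * cc m / 2)"
    by (rule sum.mono_neutral_left[OF _ _ Z]) auto
  have s4: "(\<Sum>m\<in>{ia..ib}. (R m - Lf m) * cc m / 2) = (\<Sum>m\<in>{..n}. (R m - Lf m) * cc m / 2)"
    by (rule sum.mono_neutral_left) (use ab in \<open>auto simp: cc_def\<close>)
  have gv: "gval G n u (G k) = (R k + Lf k) / 2" if "k \<le> n" for k
    unfolding v(1) R_def Lf_def by (rule gval_pw[OF st n that visc])
  have "(LBINT x=G ia..G ib. DU l G n u x) =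
      (\<Sum>j\<in>{ia..<ib}. Lf (Suc j) - R j) + (\<Sum>m\<in>{ia..ib}. (R m - Lf m) * cc m / 2)"
  proof -
    have s2': "(\<Sum>m\<in>{1..<n}. J m * ipU G n (\<delta> m) Ch) = (\<Sum>m\<in>{1..<n}. (R m - Lf m) * cc m / 2)"
      by (rule sum.cong[OF refl s2])
    show ?thesis unfolding main s1 s2' s3 s4 ..
  qed
  also have "\<dots> = (R ib + Lf ib) / 2 - (R ia + Lf ia) / 2"
    unfolding cc_def by (rule telescope[OF ab(1)])
  also have "\<dots> = gval G n u (G ib) - gval G n u (G ia)"
  proof -
    have g1: "gval G n u (G ib) = (R ib + Lf ib) / 2" using ab by (intro gv) simp
    have g2: "gval G n u (G ia) = (R ia + Lf ia) / 2" using ab by (intro gv) simp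
    show ?thesis unfolding g1 g2 ..
  qed
  finally show ?thesis .
qed

lemma level_step:
  assumes fin: "finite l" and one: "(\<lambda>x. 1) \<in> l" and st: "\<forall>j<n. G j < G (Suc j)"
    and u: "u \<in> UR l G n" and a: "a \<in> G ` {..n}" and b: "b \<in> G ` {..n}" and ab: "a < b"
  shows "(LBINT x=a..b. DU l G n u x) = gval G n u b - gval G n u a"
proof -
  obtain ia where ia: "ia \<le> n" "a = G ia" using a by auto
  obtain ib where ib: "ib \<le> n" "b = G ib" using b by auto
  have "ia < ib"
  proof (rule ccontr)
    assume "\<not> ia < ib"
    then have "G ib \<le> G ia" using grid_le[OF st, of ib ia] ia by simp
    then show False using ab ia ib by simp
  qed
  then show ?thesis unfolding ia(2) ib(2) by (rule main_level[OF fin one st u _ ib(1)])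
qed

theorem mainTheorem11:
  fixes Lam :: "lam_idx filter"
    and eta beta :: "lam_idx \<Rightarrow> real"
    and gam :: "lam_idx \<Rightarrow> nat \<Rightarrow> real"
    and L :: "lam_idx \<Rightarrow> nat"
    and u :: "lam_idx \<Rightarrow> real \<Rightarrow> real"
    and a b :: "lam_idx \<Rightarrow> real"
  assumes Lam: "fine_ultrafilter Lam"
    and eta: "infinitesimal_net Lam eta"
    and beta: "pos_infinite_net Lam beta"
    and grid: "eventually (\<lambda>l. gam l 0 = - beta l \<and> gam l (L l) = beta l \<and>
                  (\<forall>j<L l. 0 < gam l (Suc j) - gam l j \<and> gam l (Suc j) - gam l j < eta l)) Lam"
    and reals_in_grid: "\<forall>r::real. eventually (\<lambda>l. r \<in> gam l ` {..L l}) Lam"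
    and u: "eventually (\<lambda>l. u l \<in> UR l (gam l) (L l)) Lam"
    and a: "eventually (\<lambda>l. a l \<in> gam l ` {..L l}) Lam"
    and b: "eventually (\<lambda>l. b l \<in> gam l ` {..L l}) Lam"
    and ab: "eventually (\<lambda>l. a l < b l) Lam"
  shows "eventually (\<lambda>l. (LBINT x=a l..b l. DU l (gam l) (L l) (u l) x)
            = gval (gam l) (L l) (u l) (b l) - gval (gam l) (L l) (u l) (a l)) Lam"
proof -
  have fin: "eventually finite Lam" using Lam by (simp add: fine_ultrafilter_def)
  have "\<forall>l0. finite l0 \<longrightarrow> eventually (\<lambda>l. l0 \<subseteq> l) Lam" using Lam unfolding fine_ultrafilter_def by blast
  then have "eventually (\<lambda>l. {\<lambda>x::real. 1::real} \<subseteq> l) Lam" by blast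
  then have one: "eventually (\<lambda>l. (\<lambda>x. 1) \<in> l) Lam" by simp
  have st: "eventually (\<lambda>l. \<forall>j<L l. gam l j < gam l (Suc j)) Lam"
    using grid by (rule eventually_mono) auto
  have all: "eventually (\<lambda>l. finite l \<and> (\<lambda>x. 1) \<in> l \<and> (\<forall>j<L l. gam l j < gam l (Suc j)) \<and>
      u l \<in> UR l (gam l) (L l) \<and> a l \<in> gam l ` {..L l} \<and> b l \<in> gam l ` {..L l} \<and> a l < b l) Lam"
    using fin one st u a b ab by (intro eventually_conj)
  then show ?thesis
    by (rule eventually_mono) (intro level_step; blast)
qed

end
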